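(* Let $(q_l)_{l\ge1}$ be positive numbers with $q_1=1$ and $0<R:=\lim_{l\to\infty}q_l/q_{l+1}<\infty$, and assume (EQ): $\tilde f(1)>1$, or $\tilde f(1)=1$ and $\tilde g(1)<\infty$. Let $\rho^*>0$. Then the infimum $$\tilde A_{\min}=\inf\{\tilde A(z):\ z\in X_{0+},\ \rho(z)=\rho^*\}$$ is attained, and a minimizer is $z^*_l=N^*\tilde q_l(\mu^* )^l$, $l\in\mathbb{N}$, where $\mu^*\in(0,1]$ is the unique solution of $\tilde f(\mu^* )=1$ and $N^*=\rho^*/\tilde g(\mu^* )$.
   Context: $X=\{z=(z_l)_{l\ge1}:\sum_l l|z_l|<\infty\}$, $X_{0+}$ its nonnegative elements, $\rho(z)=\sum_l lz_l$, $N(z)=\sum_l z_l$. Set $\tilde q_l=q_lR^l$, $\tilde f(\mu)=\sum_{l\ge1}\tilde q_l\mu^l$, $\tilde g(\mu)=\sum_{l\ge1}l\tilde q_l\mu^l$, $\tilde f(1)=\sum_l\tilde q_l\in(0,\infty]$, $\tilde g(1)=\sum_l l\tilde q_l\in(0,\infty]$. For $z\in X_{0+}\setminus\{0\}$, $\tilde A(z)=\sum_l z_l\ln\big(z_l/(\tilde q_lN(z))\big)$ with $0\ln0=0$, and $\tilde A(0)=0$. *)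

theory Defs
  imports Complex_Main
begin

(* Sequences (z_l)_{l>=1} are encoded as functions nat => real; index 0 is unused
   (forced to 0 for elements of X_{0+}). *)

definition qt :: "(nat \<Rightarrow> real) \<Rightarrow> real \<Rightarrow> nat \<Rightarrow> real" where
  "qt q R l = q l * R ^ l"

definition Nsum :: "(nat \<Rightarrow> real) \<Rightarrow> real" where
  "Nsum z = (\<Sum>l. z l)"

definition rho :: "(nat \<Rightarrow> real) \<Rightarrow> real" where
  "rho z = (\<Sum>l. real l * z l)"

definition X0plus :: "(nat \<Rightarrow> real) set" where
  "X0plus = {z. z 0 = 0 \<and> (\<forall>l. 0 \<le> z l) \<and> summable (\<lambda>l. real l * \<bar>z l\<bar>)}"

(* tilde A, with the convention 0 ln 0 = 0 and tilde A(0) = 0 *)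
definition Atilde :: "(nat \<Rightarrow> real) \<Rightarrow> real \<Rightarrow> (nat \<Rightarrow> real) \<Rightarrow> real" where
  "Atilde q R z = (if (\<forall>l. z l = 0) then 0 else
     (\<Sum>l. if l = 0 \<or> z l = 0 then 0 else z l * ln (z l / (qt q R l * Nsum z))))"

(* tilde f(mu) = sum_{l>=1} qt_l mu^l  (only meaningful when summable) *)
definition ft :: "(nat \<Rightarrow> real) \<Rightarrow> real \<Rightarrow> real \<Rightarrow> real" where
  "ft q R \<mu> = (\<Sum>l. qt q R (Suc l) * \<mu> ^ Suc l)"

definition gt :: "(nat \<Rightarrow> real) \<Rightarrow> real \<Rightarrow> real \<Rightarrow> real" where
  "gt q R \<mu> = (\<Sum>l. real (Suc l) * qt q R (Suc l) * \<mu> ^ Suc l)"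

(* Condition (EQ): tilde f(1) > 1 (including = infinity), or tilde f(1) = 1 and tilde g(1) < infinity *)
definition EQ_cond :: "(nat \<Rightarrow> real) \<Rightarrow> real \<Rightarrow> bool" where
  "EQ_cond q R \<longleftrightarrow>
     \<not> summable (\<lambda>l. qt q R (Suc l))
     \<or> (summable (\<lambda>l. qt q R (Suc l)) \<and> (\<Sum>l. qt q R (Suc l)) > 1)
     \<or> (summable (\<lambda>l. qt q R (Suc l)) \<and> (\<Sum>l. qt q R (Suc l)) = 1
         \<and> summable (\<lambda>l. real (Suc l) * qt q R (Suc l)))"

end

theory Submission
  imports Defs
begin

lemma ratio_summ:
  fixes a :: "nat \<Rightarrow> real"
  assumes pos: "\<And>n. 0 < a n" and lim: "(\<lambda>n. a (Suc n) / a n) \<longlonglongrightarrow> L" and L1: "L < 1"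
  shows "summable a"
proof -
  define c where "c = (L + 1) / 2"
  have "c < 1" "L < c" using L1 by (auto simp: c_def)
  then have "eventually (\<lambda>n. a (Suc n) / a n < c) sequentially"
    using lim by (simp add: order_tendstoD(2))
  then obtain N where N: "\<And>n. n \<ge> N \<Longrightarrow> a (Suc n) / a n < c"
    by (auto simp: eventually_sequentially)
  show ?thesis
  proof (rule summable_ratio_test[OF \<open>c < 1\<close>])
    fix n assume "N \<le> n"
    then have "a (Suc n) / a n < c" by (rule N)
    then have "a (Suc n) < c * a n" using pos[of n] by (simp add: divide_less_eq)
    then show "norm (a (Suc n)) \<le> c * norm (a n)" using pos[of n] pos[of "Suc n"] by simp
  qed
qed

lemma qt_ratio:
  assumes qpos: "\<forall>l\<ge>1. q l > 0"
    and Rlim: "(\<lambda>l. q l / q (Suc l)) \<longlonglongrightarrow> R"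
    and Rpos: "0 < R" and mu: "0 < \<mu>"
  shows "(\<lambda>l. (qt q R (Suc (Suc l)) * \<mu> ^ Suc (Suc l)) / (qt q R (Suc l) * \<mu> ^ Suc l)) \<longlonglongrightarrow> \<mu>"
proof -
  have "(\<lambda>l. inverse (q l / q (Suc l))) \<longlonglongrightarrow> inverse R"
    using Rlim Rpos by (intro tendsto_inverse) auto
  then have "(\<lambda>l. inverse (q (Suc l) / q (Suc (Suc l)))) \<longlonglongrightarrow> inverse R"
    by (rule LIMSEQ_Suc)
  then have "(\<lambda>l. inverse (q (Suc l) / q (Suc (Suc l))) * (R * \<mu>)) \<longlonglongrightarrow> inverse R * (R * \<mu>)"
    by (intro tendsto_mult tendsto_const)
  moreover have "inverse R * (R * \<mu>) = \<mu>" using Rpos by simp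
  moreover have "inverse (q (Suc l) / q (Suc (Suc l))) * (R * \<mu>) =
      (qt q R (Suc (Suc l)) * \<mu> ^ Suc (Suc l)) / (qt q R (Suc l) * \<mu> ^ Suc l)" for l
  proof -
    have "q (Suc l) > 0" "q (Suc (Suc l)) > 0" using qpos by auto
    then show ?thesis using Rpos mu by (simp add: qt_def field_simps)
  qed
  ultimately show ?thesis by simp
qed

lemma qt_pos:
  assumes qpos: "\<forall>l\<ge>1. q l > 0" and Rpos: "0 < R" and mu: "0 < \<mu>"
  shows "0 < qt q R (Suc l) * \<mu> ^ Suc l"
  using qpos Rpos mu by (simp add: qt_def)

lemma ft_summ:
  assumes qpos: "\<forall>l\<ge>1. q l > 0"
    and Rlim: "(\<lambda>l. q l / q (Suc l)) \<longlonglongrightarrow> R"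
    and Rpos: "0 < R" and mu: "0 < \<mu>" "\<mu> < 1"
  shows "summable (\<lambda>l. qt q R (Suc l) * \<mu> ^ Suc l)"
  by (rule ratio_summ[OF qt_pos[OF qpos Rpos] qt_ratio[OF qpos Rlim Rpos]]) (use mu in auto)

lemma gt_summ:
  assumes qpos: "\<forall>l\<ge>1. q l > 0"
    and Rlim: "(\<lambda>l. q l / q (Suc l)) \<longlonglongrightarrow> R"
    and Rpos: "0 < R" and mu: "0 < \<mu>" "\<mu> < 1"
  shows "summable (\<lambda>l. real (Suc l) * qt q R (Suc l) * \<mu> ^ Suc l)"
proof (rule ratio_summ)
  show "0 < real (Suc n) * qt q R (Suc n) * \<mu> ^ Suc n" for n
    using qt_pos[OF qpos Rpos mu(1), of n] by (simp add: mult.assoc)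
  have "(\<lambda>n. of_nat (Suc (Suc n)) / of_nat (Suc n) :: real) \<longlonglongrightarrow> 1"
    by (rule LIMSEQ_Suc[OF LIMSEQ_Suc_n_over_n])
  then have "(\<lambda>n. (of_nat (Suc (Suc n)) / of_nat (Suc n) :: real) *
     ((qt q R (Suc (Suc n)) * \<mu> ^ Suc (Suc n)) / (qt q R (Suc n) * \<mu> ^ Suc n))) \<longlonglongrightarrow> 1 * \<mu>"
    by (intro tendsto_mult qt_ratio[OF qpos Rlim Rpos mu(1)])
  moreover have e: "\<And>n. real (Suc (Suc n)) * qt q R (Suc (Suc n)) * \<mu> ^ Suc (Suc n) /
          (real (Suc n) * qt q R (Suc n) * \<mu> ^ Suc n) = (of_nat (Suc (Suc n)) / of_nat (Suc n) :: real) *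
     ((qt q R (Suc (Suc n)) * \<mu> ^ Suc (Suc n)) / (qt q R (Suc n) * \<mu> ^ Suc n))"
    by (simp only: times_divide_times_eq mult.assoc)
  ultimately show "(\<lambda>n. real (Suc (Suc n)) * qt q R (Suc (Suc n)) * \<mu> ^ Suc (Suc n) /
          (real (Suc n) * qt q R (Suc n) * \<mu> ^ Suc n)) \<longlonglongrightarrow> \<mu>"
    by (simp only: e mult_1_left)
qed (use mu in auto)


lemma lnqt_bound:
  assumes qpos: "\<forall>l\<ge>1. q l > 0"
    and Rlim: "(\<lambda>l. q l / q (Suc l)) \<longlonglongrightarrow> R"
    and Rpos: "0 < R"
  shows "\<exists>C. \<forall>l\<ge>1. \<bar>ln (qt q R l)\<bar> \<le> C + real l"
proof -
  define a where "a l = qt q R (Suc l)" for l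
  have apos: "0 < a l" for l using qt_pos[OF qpos Rpos, of 1 l] by (simp add: a_def)
  have "(\<lambda>l. a (Suc l) / a l) \<longlonglongrightarrow> 1"
    using qt_ratio[OF qpos Rlim Rpos, of 1] by (simp add: a_def)
  then have "(\<lambda>l. ln (a (Suc l) / a l)) \<longlonglongrightarrow> ln 1"
    by (intro tendsto_ln) auto
  then have "eventually (\<lambda>l. \<bar>ln (a (Suc l) / a l)\<bar> < 1) sequentially"
    using order_tendstoD[of _ 0 sequentially] by (auto simp: tendsto_iff dist_real_def)
  then obtain M where M: "\<And>n. n \<ge> M \<Longrightarrow> \<bar>ln (a (Suc n) / a n)\<bar> < 1"
    by (auto simp: eventually_sequentially)
  have step: "\<bar>ln (a (Suc n)) - ln (a n)\<bar> \<le> 1" if "n \<ge> M" for n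
    using M[OF that] apos[of n] apos[of "Suc n"] by (simp add: ln_div)
  have ind: "\<bar>ln (a (M + k)) - ln (a M)\<bar> \<le> real k" for k
  proof (induction k)
    case 0 then show ?case by simp
  next
    case (Suc k)
    have "\<bar>ln (a (Suc (M + k))) - ln (a (M + k))\<bar> \<le> 1" by (rule step) simp
    then show ?case using Suc by simp
  qed
  define C where "C = (\<Sum>k\<le>M. \<bar>ln (a k)\<bar>)"
  have Cge: "\<bar>ln (a k)\<bar> \<le> C" if "k \<le> M" for k
    unfolding C_def by (rule member_le_sum) (use that in auto)
  have "\<bar>ln (a n)\<bar> \<le> C + real n" for n
  proof (cases "n \<le> M")
    case True then show ?thesis using Cge[OF True] by simp
  next
    case False
    then obtain k where k: "n = M + k" by (metis le_add_diff_inverse nat_le_linear)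
    show ?thesis using ind[of k] Cge[of M] k by simp
  qed
  then have "\<forall>l\<ge>1. \<bar>ln (qt q R l)\<bar> \<le> C + real l"
  proof (intro allI impI)
    fix l :: nat assume "l \<ge> 1"
    then obtain n where n: "l = Suc n" by (cases l) auto
    have "\<bar>ln (a n)\<bar> \<le> C + real n" by fact
    then show "\<bar>ln (qt q R l)\<bar> \<le> C + real l" by (simp add: n a_def)
  qed
  then show ?thesis by blast
qed


lemma ylny_le: fixes y :: real assumes "0 < y" shows "y * ln (1 / y) \<le> 1"
proof -
  have "ln (1/y) \<le> 1/y - 1" using assms ln_le_minus_one[of "1/y"] by simp
  then have "y * ln (1/y) \<le> y * (1/y - 1)" using assms by (intro mult_left_mono) auto
  also have "\<dots> = 1 - y" using assms by (simp add: field_simps)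
  finally show ?thesis using assms by simp
qed

lemma zlnz_pointwise:
  fixes z B :: real and l :: nat
  assumes z0: "0 \<le> z" and zB: "z \<le> B"
  shows "\<bar>z * ln z\<bar> \<le> real l * z + B * z + 2 * exp (-1/2) ^ l"
proof -
  have e0: "0 \<le> exp (-1/2::real) ^ l" by simp
  consider "z = 0" | "z \<ge> 1" | "exp (- real l) \<le> z" "z < 1" | "0 < z" "z < exp (- real l)"
    using z0 by force
  then show ?thesis
  proof cases
    case 1 then show ?thesis using e0 by simp
  next
    case 2
    have "0 \<le> ln z" using 2 by simp
    have "ln z \<le> z - 1" using 2 by (intro ln_le_minus_one) simp
    then have "ln z \<le> B" using zB by simp
    then have "ln z * z \<le> B * z" using z0 by (rule mult_right_mono)
    then have "z * ln z \<le> B * z" by (simp add: mult.commute)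
    moreover have "0 \<le> real l * z" using z0 by simp
    moreover have "\<bar>z * ln z\<bar> = z * ln z" using \<open>0 \<le> ln z\<close> z0 by (simp add: abs_mult)
    ultimately show ?thesis using e0 by linarith
  next
    case 3
    have zp: "0 < z" using 3 by (meson exp_gt_zero less_le_trans)
    have "ln (exp (- real l)) \<le> ln z" using 3 zp by (subst ln_le_cancel_iff) auto
    then have ll: "- real l \<le> ln z" by simp
    have "ln z < 0" using 3 zp by simp
    have "z * (- real l) \<le> z * ln z" using zp ll by (intro mult_left_mono) auto
    moreover have "\<bar>z * ln z\<bar> = - (z * ln z)" using zp \<open>ln z < 0\<close> by (simp add: abs_mult)
    ultimately have "\<bar>z * ln z\<bar> \<le> real l * z" by (simp add: mult.commute)
    moreover have "0 \<le> B * z" using z0 zB by simp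
    ultimately show ?thesis using e0 by linarith
  next
    case 4
    define y where "y = sqrt z"
    have yp: "0 < y" using 4 by (simp add: y_def)
    have zy: "z = y * y" using 4 by (simp add: y_def)
    have "ln z = 2 * ln y" using yp by (simp add: zy ln_mult)
    have "exp (- real l) \<le> 1" by simp
    then have "z < 1" using 4 by linarith
    then have "ln z < 0" using 4 by simp
    have "y < 1" using \<open>z < 1\<close> 4 by (simp add: y_def)
    then have "ln y < 0" using yp by simp
    have "\<bar>z * ln z\<bar> = 2 * y * (y * ln (1/y))"
      using yp \<open>ln y < 0\<close> \<open>ln z = 2 * ln y\<close> by (simp add: zy abs_mult ln_div)
    also have "\<dots> \<le> 2 * y * 1" using ylny_le[OF yp] yp by (intro mult_left_mono) auto
    also have "y \<le> sqrt (exp (- real l))" using 4 by (simp add: y_def)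
    also have "sqrt (exp (- real l)) = exp (-1/2) ^ l"
    proof (rule real_sqrt_unique)
      have "(exp (-1/2) ^ l)\<^sup>2 = exp (real l * (-1/2)) * exp (real l * (-1/2))"
        by (simp only: power2_eq_square exp_of_nat_mult)
      also have "\<dots> = exp (- real l)" by (simp flip: exp_add)
      finally show "(exp (-1/2) ^ l)\<^sup>2 = exp (- real l)" .
    qed simp
    finally have "\<bar>z * ln z\<bar> \<le> 2 * exp (-1/2) ^ l" by simp
    moreover have "0 \<le> B * z" using z0 zB by simp
    moreover have "0 \<le> real l * z" using z0 by simp
    ultimately show ?thesis by linarith
  qed
qed


lemma X0_facts:
  assumes "z \<in> X0plus"
  shows "z 0 = 0" "\<And>l. 0 \<le> z l" "summable (\<lambda>l. real l * z l)" "summable z"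
    "\<And>l. z l \<le> rho z"
proof -
  show z0: "z 0 = 0" and nn: "\<And>l. 0 \<le> z l" using assms by (auto simp: X0plus_def)
  show s1: "summable (\<lambda>l. real l * z l)" using assms by (auto simp: X0plus_def)
  have le: "z l \<le> real l * z l" for l
  proof (cases l)
    case (Suc n)
    have "1 * z l \<le> real l * z l" using nn[of l] Suc by (intro mult_right_mono) auto
    then show ?thesis by simp
  qed (use z0 in simp)
  show "summable z"
    by (rule summable_comparison_test'[OF s1, of 0]) (use le nn in auto)
  fix l
  have "real l * z l \<le> rho z"
    unfolding rho_def using sum_le_suminf[OF s1, of "{l}"] nn by auto
  then show "z l \<le> rho z" using le[of l] by linarith
qed

lemma zlnz_summable:
  assumes "z \<in> X0plus"
  shows "summable (\<lambda>l. \<bar>z l * ln (z l)\<bar>)"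
proof (rule summable_comparison_test')
  note F = X0_facts[OF assms]
  show "summable (\<lambda>l. real l * z l + rho z * z l + 2 * exp (-1/2) ^ l)"
    by (intro summable_add summable_mult F summable_geometric) auto
  show "norm \<bar>z l * ln (z l)\<bar> \<le> real l * z l + rho z * z l + 2 * exp (-1/2) ^ l" for l
    using zlnz_pointwise[OF F(2) F(5), of l l] by simp
qed

lemma terms_summable:
  assumes qpos: "\<forall>l\<ge>1. q l > 0"
    and Rlim: "(\<lambda>l. q l / q (Suc l)) \<longlonglongrightarrow> R"
    and Rpos: "0 < R" and zX: "z \<in> X0plus" and Npos: "0 < N"
  shows "summable (\<lambda>l. if l = 0 \<or> z l = 0 then 0 else z l * ln (z l / (qt q R l * N)))"
proof -
  note F = X0_facts[OF zX]
  obtain C where C: "\<And>l. l \<ge> 1 \<Longrightarrow> \<bar>ln (qt q R l)\<bar> \<le> C + real l"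
    using lnqt_bound[OF qpos Rlim Rpos] by blast
  show ?thesis
  proof (rule summable_comparison_test')
    show "summable (\<lambda>l. \<bar>z l * ln (z l)\<bar> + \<bar>C\<bar> * z l + real l * z l + \<bar>ln N\<bar> * z l)"
      by (intro summable_add summable_mult F zlnz_summable[OF zX])
    fix l
    show "norm (if l = 0 \<or> z l = 0 then 0 else z l * ln (z l / (qt q R l * N)))
       \<le> \<bar>z l * ln (z l)\<bar> + \<bar>C\<bar> * z l + real l * z l + \<bar>ln N\<bar> * z l"
    proof (cases "l = 0 \<or> z l = 0")
      case True then show ?thesis using F(2)[of l] by simp
    next
      case False
      then have l1: "l \<ge> 1" and zp: "0 < z l" using F(2)[of l] by auto
      have qp: "0 < qt q R l" using qpos Rpos l1 by (simp add: qt_def)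
      have eq: "z l * ln (z l / (qt q R l * N)) = z l * ln (z l) - z l * ln (qt q R l) - z l * ln N"
        using zp qp Npos by (simp add: ln_div ln_mult algebra_simps)
      have "\<bar>z l * ln (qt q R l)\<bar> \<le> z l * (\<bar>C\<bar> + real l)"
        using C[OF l1] zp by (simp add: abs_mult)
      moreover have "\<bar>z l * ln N\<bar> = \<bar>ln N\<bar> * z l" using zp by (simp add: abs_mult)
      ultimately show ?thesis using False eq
        by (simp add: algebra_simps)
    qed
  qed
qed


lemma pz_sums:
  assumes summ: "summable (\<lambda>l. qt q R (Suc l) * \<mu> ^ Suc l)"
  shows "(\<lambda>l. if l = 0 then 0 else qt q R l * \<mu> ^ l) sums ft q R \<mu>"
proof -
  let ?p = "\<lambda>l. if l = 0 then 0 else qt q R l * \<mu> ^ l"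
  have s: "summable ?p" using summ by (subst summable_Suc_iff[symmetric]) simp
  have "(\<Sum>l. ?p (Suc l)) = suminf ?p - ?p 0" by (rule suminf_split_head[OF s])
  then have "suminf ?p = ft q R \<mu>" by (simp add: ft_def)
  then show ?thesis using s by (metis summable_sums)
qed

lemma pointwise_lb:
  fixes x qv N p \<mu> :: real and l :: nat
  assumes x: "0 < x" and qv: "0 < qv" and N: "0 < N" and mu: "0 < \<mu>" and p: "p = qv * \<mu> ^ l"
  shows "x + ln \<mu> * (real l * x) - N * p \<le> x * ln (x / (qv * N))"
proof -
  have pp: "0 < p" using p qv mu by simp
  have "ln (N * p / x) \<le> N * p / x - 1" using ln_le_minus_one[of "N * p / x"] x N pp by simp
  then have h: "x * ln (N * p / x) \<le> x * (N * p / x - 1)" using x by (intro mult_left_mono) auto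
  have h2: "x * (N * p / x - 1) = N * p - x" using x by (simp add: field_simps)
  have e1: "ln (N * p / x) = ln N + ln qv + real l * ln \<mu> - ln x"
    using x N qv mu by (simp add: p ln_div ln_mult ln_realpow)
  have e2: "ln (x / (qv * N)) = ln x - ln qv - ln N"
    using x N qv by (simp add: ln_div ln_mult)
  have "x * ln N + x * ln qv + x * (real l * ln \<mu>) - x * ln x \<le> N * p - x"
    using h h2 e1 by (simp add: right_diff_distrib distrib_left)
  then show ?thesis unfolding e2 by (simp add: right_diff_distrib algebra_simps)
qed


lemma lower_bound:
  assumes qpos: "\<forall>l\<ge>1. q l > 0"
    and Rlim: "(\<lambda>l. q l / q (Suc l)) \<longlonglongrightarrow> R"
    and Rpos: "0 < R" and mu: "0 < \<mu>"
    and summ: "summable (\<lambda>l. qt q R (Suc l) * \<mu> ^ Suc l)" and ft1: "ft q R \<mu> = 1"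
    and zX: "z \<in> X0plus" and rz: "rho z = \<rho>s" and rhopos: "0 < \<rho>s"
  shows "\<rho>s * ln \<mu> \<le> Atilde q R z"
proof -
  note F = X0_facts[OF zX]
  have nz: "\<not> (\<forall>l. z l = 0)"
  proof
    assume "\<forall>l. z l = 0"
    then have "rho z = 0" by (simp add: rho_def)
    then show False using rz rhopos by simp
  qed
  then obtain i where "z i \<noteq> 0" by blast
  then have "0 < z i" using F(2)[of i] by simp
  define N where "N = Nsum z"
  have Npos: "0 < N" unfolding N_def Nsum_def by (rule suminf_pos2[OF F(4) F(2)]) fact
  define t where "t l = (if l = 0 \<or> z l = 0 then 0 else z l * ln (z l / (qt q R l * N)))" for l
  have A: "Atilde q R z = suminf t" using nz unfolding Atilde_def t_def N_def by presburger
  have ts: "summable t" unfolding t_def by (rule terms_summable[OF qpos Rlim Rpos zX Npos])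
  define p where "p l = (if l = 0 then 0 else qt q R l * \<mu> ^ l)" for l
  have ps: "p sums 1" using pz_sums[OF summ] ft1 by (simp add: p_def[abs_def])
  have zs: "z sums N" using F(4) by (simp add: N_def Nsum_def summable_sums)
  have lzs: "(\<lambda>l. real l * z l) sums \<rho>s" using F(3) rz by (metis rho_def summable_sums)
  define w where "w l = z l + ln \<mu> * (real l * z l) - N * p l" for l
  have ws: "w sums (N + ln \<mu> * \<rho>s - N * 1)"
    unfolding w_def by (intro sums_diff sums_add sums_mult zs lzs ps)
  have le: "w l \<le> t l" for l
  proof (cases "l = 0 \<or> z l = 0")
    case True
    have "0 \<le> p l"
    proof (cases "l = 0")
      case False
      then have "0 < q l" using qpos by auto
      then show ?thesis using Rpos mu False by (simp add: p_def qt_def)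
    qed (simp add: p_def)
    then show ?thesis using True F(1) Npos by (auto simp: w_def t_def)
  next
    case False
    then have l1: "l \<ge> 1" and zp: "0 < z l" using F(2)[of l] by auto
    have qp: "0 < qt q R l" using qpos Rpos l1 by (simp add: qt_def)
    show ?thesis using False pointwise_lb[OF zp qp Npos mu, of "p l" l] by (simp add: w_def t_def p_def)
  qed
  have "suminf w \<le> suminf t" by (rule suminf_le[OF le]) (use ws ts in \<open>auto simp: sums_iff\<close>)
  moreover have "suminf w = \<rho>s * ln \<mu>" using ws by (simp add: sums_iff)
  ultimately show ?thesis using A by simp
qed


lemma ft_isCont:
  assumes qpos: "\<forall>l\<ge>1. q l > 0"
    and Rlim: "(\<lambda>l. q l / q (Suc l)) \<longlonglongrightarrow> R"
    and Rpos: "0 < R" and x: "\<bar>x\<bar> < 1"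
  shows "isCont (ft q R) x"
proof -
  define K where "K = (1 + \<bar>x\<bar>) / 2"
  have K: "0 < K" "K < 1" "\<bar>x\<bar> < K" using x by (auto simp: K_def)
  define c where "c l = qt q R (Suc l)" for l
  have "summable (\<lambda>l. qt q R (Suc l) * K ^ Suc l)" by (rule ft_summ[OF qpos Rlim Rpos K(1,2)])
  then have "summable (\<lambda>l. K * (c l * K ^ l))" by (simp add: c_def mult_ac)
  then have cK: "summable (\<lambda>l. c l * K ^ l)" using K by simp
  have eq: "ft q R y = y * (\<Sum>l. c l * y ^ l)" if "y \<in> {-K<..<K}" for y
  proof -
    have "summable (\<lambda>l. c l * y ^ l)" by (rule powser_inside[OF cK]) (use that K in auto)
    then have "(\<Sum>l. y * (c l * y ^ l)) = y * (\<Sum>l. c l * y ^ l)" by (rule suminf_mult)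
    then show ?thesis by (simp add: ft_def c_def mult_ac)
  qed
  have ev: "eventually (\<lambda>y. ft q R y = y * (\<Sum>l. c l * y ^ l)) (nhds x)"
  proof -
    have "eventually (\<lambda>y. y \<in> {-K<..<K}) (nhds x)"
      by (rule eventually_nhds_in_open) (use K in auto)
    then show ?thesis by (rule eventually_mono) (rule eq)
  qed
  have "isCont (\<lambda>y. y * (\<Sum>l. c l * y ^ l)) x"
    by (intro continuous_intros isCont_powser[OF cK]) (use K in auto)
  then show ?thesis using isCont_cong[OF ev] by simp
qed

lemma exists_mu:
  assumes qpos: "\<forall>l\<ge>1. q l > 0"
    and Rlim: "(\<lambda>l. q l / q (Suc l)) \<longlonglongrightarrow> R"
    and Rpos: "0 < R" and EQ: "EQ_cond q R"
  shows "\<exists>\<mu>. 0 < \<mu> \<and> \<mu> \<le> 1 \<and> summable (\<lambda>l. qt q R (Suc l) * \<mu> ^ Suc l) \<and> ft q R \<mu> = 1"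
proof (cases "summable (\<lambda>l. qt q R (Suc l)) \<and> (\<Sum>l. qt q R (Suc l)) = 1")
  case True
  then show ?thesis by (intro exI[of _ 1]) (simp add: ft_def)
next
  case False
  have nn: "0 \<le> qt q R (Suc l)" for l using qt_pos[OF qpos Rpos, of 1 l] by simp
  have "\<exists>n. (\<Sum>l<n. qt q R (Suc l)) > 1"
  proof (cases "summable (\<lambda>l. qt q R (Suc l))")
    case True
    then have gt: "(\<Sum>l. qt q R (Suc l)) > 1" using EQ False by (auto simp: EQ_cond_def)
    have "(\<lambda>n. \<Sum>l<n. qt q R (Suc l)) \<longlonglongrightarrow> (\<Sum>l. qt q R (Suc l))"
      using True by (simp add: summable_LIMSEQ)
    then have "eventually (\<lambda>n. (\<Sum>l<n. qt q R (Suc l)) > 1) sequentially"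
      using gt by (simp add: order_tendstoD(1))
    then show ?thesis by (auto simp: eventually_sequentially)
  next
    case ns: False
    show ?thesis
    proof (rule ccontr)
      assume "\<not> ?thesis"
      then have "\<And>n. (\<Sum>l<n. qt q R (Suc l)) \<le> 1" by (simp add: not_less)
      then have "summable (\<lambda>l. qt q R (Suc l))" by (rule summableI_nonneg_bounded[OF nn])
      then show False using ns by simp
    qed
  qed
  then obtain n where n: "(\<Sum>l<n. qt q R (Suc l)) > 1" by blast
  define P where "P x = (\<Sum>l<n. qt q R (Suc l) * x ^ Suc l)" for x :: real
  have "(P \<longlongrightarrow> P 1) (at_left 1)" unfolding P_def by (intro tendsto_intros)
  moreover have "P 1 > 1" using n by (simp add: P_def)
  ultimately have "eventually (\<lambda>x. P x > 1) (at_left 1)" by (simp add: order_tendstoD(1))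
  moreover have "eventually (\<lambda>x. x \<in> {0<..<1}) (at_left (1::real))"
    by (rule eventually_at_left_real) simp
  ultimately have "eventually (\<lambda>x. P x > 1 \<and> x \<in> {0<..<1}) (at_left (1::real))"
    by (rule eventually_conj)
  then obtain b where b: "P b > 1" "0 < b" "b < 1"
    using eventually_happens[of _ "at_left (1::real)"] trivial_limit_at_left_real by fastforce
  have sb: "summable (\<lambda>l. qt q R (Suc l) * b ^ Suc l)" by (rule ft_summ[OF qpos Rlim Rpos b(2,3)])
  have "P b \<le> ft q R b" unfolding P_def ft_def
    by (rule sum_le_suminf[OF sb]) (use nn b in auto)
  then have fb: "1 \<le> ft q R b" using b by simp
  have "ft q R 0 = 0" by (simp add: ft_def)
  then obtain \<mu> where mu: "0 \<le> \<mu>" "\<mu> \<le> b" "ft q R \<mu> = 1"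
    using IVT[of "ft q R" 0 1 b] fb b ft_isCont[OF qpos Rlim Rpos] by force
  have "\<mu> \<noteq> 0" using mu \<open>ft q R 0 = 0\<close> by auto
  then have "0 < \<mu>" using mu by simp
  moreover have "\<mu> < 1" using mu b by simp
  ultimately show ?thesis using mu ft_summ[OF qpos Rlim Rpos] by (intro exI[of _ \<mu>]) auto
qed


lemma ft_strict:
  assumes qpos: "\<forall>l\<ge>1. q l > 0" and Rpos: "0 < R"
    and m: "0 < \<mu>1" "\<mu>1 < \<mu>2"
    and s1: "summable (\<lambda>l. qt q R (Suc l) * \<mu>1 ^ Suc l)"
    and s2: "summable (\<lambda>l. qt q R (Suc l) * \<mu>2 ^ Suc l)"
  shows "ft q R \<mu>1 < ft q R \<mu>2"
proof -
  have "0 < (\<Sum>l. qt q R (Suc l) * \<mu>2 ^ Suc l - qt q R (Suc l) * \<mu>1 ^ Suc l)"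
  proof (rule suminf_pos)
    show "summable (\<lambda>l. qt q R (Suc l) * \<mu>2 ^ Suc l - qt q R (Suc l) * \<mu>1 ^ Suc l)"
      by (rule summable_diff[OF s2 s1])
    fix l
    have "\<mu>1 ^ Suc l < \<mu>2 ^ Suc l" using m by (intro power_strict_mono) auto
    moreover have "0 < qt q R (Suc l)" using qt_pos[OF qpos Rpos, of 1 l] by simp
    ultimately show "0 < qt q R (Suc l) * \<mu>2 ^ Suc l - qt q R (Suc l) * \<mu>1 ^ Suc l" by simp
  qed
  also have "\<dots> = ft q R \<mu>2 - ft q R \<mu>1" unfolding ft_def by (rule suminf_diff[OF s2 s1, symmetric])
  finally show ?thesis by simp
qed

theorem theorem8:
  fixes q :: "nat \<Rightarrow> real" and R \<rho>s :: real
  assumes qpos: "\<forall>l\<ge>1. q l > 0"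
    and q1: "q 1 = 1"
    and Rlim: "(\<lambda>l. q l / q (Suc l)) \<longlonglongrightarrow> R"
    and Rpos: "0 < R"
    and EQ: "EQ_cond q R"
    and rhopos: "0 < \<rho>s"
  shows "(\<exists>!\<mu>. 0 < \<mu> \<and> \<mu> \<le> 1 \<and> summable (\<lambda>l. qt q R (Suc l) * \<mu> ^ Suc l) \<and> ft q R \<mu> = 1)
    \<and> (\<forall>\<mu>. 0 < \<mu> \<and> \<mu> \<le> 1 \<and> summable (\<lambda>l. qt q R (Suc l) * \<mu> ^ Suc l) \<and> ft q R \<mu> = 1 \<longrightarrow>
        (let Ns = \<rho>s / gt q R \<mu>;
             zs = (\<lambda>l. if l = 0 then 0 else Ns * qt q R l * \<mu> ^ l)
         in zs \<in> X0plus \<and> rho zs = \<rho>s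
            \<and> (\<forall>z\<in>X0plus. rho z = \<rho>s \<longrightarrow> Atilde q R zs \<le> Atilde q R z)
            \<and> Atilde q R zs = Inf {Atilde q R z | z. z \<in> X0plus \<and> rho z = \<rho>s}))"
proof (intro conjI allI impI)
  let ?P = "\<lambda>\<mu>. 0 < \<mu> \<and> \<mu> \<le> 1 \<and> summable (\<lambda>l. qt q R (Suc l) * \<mu> ^ Suc l) \<and> ft q R \<mu> = 1"
  show "\<exists>!\<mu>. ?P \<mu>"
  proof (rule ex_ex1I)
    show "\<exists>\<mu>. ?P \<mu>" by (rule exists_mu[OF qpos Rlim Rpos EQ])
    fix x y assume x: "?P x" and y: "?P y"
    show "x = y"
    proof (rule ccontr)
      assume "x \<noteq> y"
      then consider "x < y" | "y < x" by linarith
      then show False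
      proof cases
        case 1 then show False using ft_strict[OF qpos Rpos, of x y] x y by simp
      next
        case 2 then show False using ft_strict[OF qpos Rpos, of y x] x y by simp
      qed
    qed
  qed
next
  fix \<mu> assume mu: "0 < \<mu> \<and> \<mu> \<le> 1 \<and> summable (\<lambda>l. qt q R (Suc l) * \<mu> ^ Suc l) \<and> ft q R \<mu> = 1"
  then have mu0: "0 < \<mu>" and mu1: "\<mu> \<le> 1" and summ: "summable (\<lambda>l. qt q R (Suc l) * \<mu> ^ Suc l)"
    and ft1: "ft q R \<mu> = 1" by auto
  have gs: "summable (\<lambda>l. real (Suc l) * qt q R (Suc l) * \<mu> ^ Suc l)"
  proof (cases "\<mu> < 1")
    case True then show ?thesis by (rule gt_summ[OF qpos Rlim Rpos mu0])
  next
    case False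
    then have "\<mu> = 1" using mu1 by simp
    then have "summable (\<lambda>l. qt q R (Suc l))" "(\<Sum>l. qt q R (Suc l)) = 1"
      using summ ft1 by (auto simp: ft_def)
    then have "summable (\<lambda>l. real (Suc l) * qt q R (Suc l))" using EQ by (auto simp: EQ_cond_def)
    then show ?thesis using \<open>\<mu> = 1\<close> by simp
  qed
  have gpos: "0 < gt q R \<mu>" unfolding gt_def
  proof (rule suminf_pos[OF gs])
    fix l show "0 < real (Suc l) * qt q R (Suc l) * \<mu> ^ Suc l"
      using qt_pos[OF qpos Rpos mu0, of l] by (simp add: mult.assoc)
  qed
  define Ns where "Ns = \<rho>s / gt q R \<mu>"
  have Nspos: "0 < Ns" using rhopos gpos by (simp add: Ns_def)
  define zs where "zs = (\<lambda>l. if l = 0 then 0 else Ns * qt q R l * \<mu> ^ l)"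
  have zsS: "zs (Suc l) = Ns * (qt q R (Suc l) * \<mu> ^ Suc l)" for l by (simp add: zs_def)
  have zspos: "0 < zs l" if l1: "l \<ge> 1" for l
  proof -
    obtain k where "l = Suc k" using l1 by (cases l) auto
    then show ?thesis using zsS[of k] Nspos qt_pos[OF qpos Rpos mu0, of k] by simp
  qed
  have zsnn: "0 \<le> zs l" for l using zspos[of l] by (cases "l = 0") (auto simp: zs_def)
  have lzs: "(\<lambda>l. real l * zs l) sums \<rho>s"
  proof -
    have "(\<lambda>l. Ns * (real (Suc l) * qt q R (Suc l) * \<mu> ^ Suc l)) sums (Ns * gt q R \<mu>)"
      unfolding gt_def by (intro sums_mult summable_sums gs)
    moreover have "Ns * gt q R \<mu> = \<rho>s" using gpos by (simp add: Ns_def)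
    ultimately have h: "(\<lambda>l. real (Suc l) * zs (Suc l)) sums \<rho>s" by (simp add: zsS mult_ac)
    have "zs 0 = 0" by (simp add: zs_def)
    then show ?thesis using sums_Suc_iff[of "\<lambda>l. real l * zs l" \<rho>s] h by simp
  qed
  have zsX: "zs \<in> X0plus"
    unfolding X0plus_def using zsnn lzs by (auto simp: zs_def sums_iff)
  have rzs: "rho zs = \<rho>s" using lzs by (simp add: rho_def sums_iff)
  have Nzs: "Nsum zs = Ns"
  proof -
    have "(\<lambda>l. Ns * (qt q R (Suc l) * \<mu> ^ Suc l)) sums (Ns * 1)"
      using ft1 by (metis ft_def sums_mult summable_sums summ)
    then have "(\<lambda>l. zs (Suc l)) sums Ns" by (simp add: zsS)
    moreover have "zs 0 = 0" by (simp add: zs_def)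
    ultimately have "zs sums Ns" using sums_Suc_iff[of zs Ns] by simp
    then show ?thesis by (simp add: Nsum_def sums_iff)
  qed
  have Azs: "Atilde q R zs = \<rho>s * ln \<mu>"
  proof -
    have nz: "\<not> (\<forall>l. zs l = 0)" using zspos[of 1] by (metis less_irrefl order_refl)
    have tm: "(if l = 0 \<or> zs l = 0 then 0 else zs l * ln (zs l / (qt q R l * Nsum zs)))
        = ln \<mu> * (real l * zs l)" for l
    proof (cases "l = 0")
      case False
      then have zp: "0 < zs l" using zspos by simp
      have qp: "0 < qt q R l" using qpos Rpos False by (simp add: qt_def)
      have "zs l / (qt q R l * Nsum zs) = \<mu> ^ l" using False qp Nspos unfolding Nzs by (simp add: zs_def)
      then show ?thesis using zp mu0 by (simp add: ln_realpow)
    qed (simp add: zs_def)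
    have "Atilde q R zs = (\<Sum>l. ln \<mu> * (real l * zs l))"
      using nz by (simp add: Atilde_def tm)
    also have "\<dots> = ln \<mu> * \<rho>s" using sums_mult[OF lzs, of "ln \<mu>"] by (simp add: sums_iff)
    finally show ?thesis by simp
  qed
  have minimal: "\<forall>z\<in>X0plus. rho z = \<rho>s \<longrightarrow> Atilde q R zs \<le> Atilde q R z"
    using lower_bound[OF qpos Rlim Rpos mu0 summ ft1 _ _ rhopos] Azs by auto
  have inf: "Atilde q R zs = Inf {Atilde q R z | z. z \<in> X0plus \<and> rho z = \<rho>s}"
    by (rule cInf_eq_minimum[symmetric]) (use zsX rzs minimal in auto)
  show "let Ns = \<rho>s / gt q R \<mu>;
             zs = (\<lambda>l. if l = 0 then 0 else Ns * qt q R l * \<mu> ^ l)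
         in zs \<in> X0plus \<and> rho zs = \<rho>s
            \<and> (\<forall>z\<in>X0plus. rho z = \<rho>s \<longrightarrow> Atilde q R zs \<le> Atilde q R z)
            \<and> Atilde q R zs = Inf {Atilde q R z | z. z \<in> X0plus \<and> rho z = \<rho>s}"
    unfolding Let_def using zsX rzs minimal inf by (simp only: Ns_def zs_def)
qed

end
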